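(* Let $e_1,\dots,e_k\in\mathbb{C}^{n\times n}$ be an anticommuting family, $n\ge 1$. Then \[\sum_{i=1}^k \mathrm{rk}(e_i^n)\le (2\log_2 n+1)\,n.\]
   Context: A family $e_1,\dots,e_k$ of complex $n\times n$ matrices is called anticommuting if $e_ie_j=-e_je_i$ for all distinct $i,j\in\{1,\dots,k\}$. $\mathrm{rk}$ denotes matrix rank. *)

theory Defs
  imports "HOL-Analysis.Analysis"
begin

fun matrix_pow :: "'a::semiring_1^'n^'n \<Rightarrow> nat \<Rightarrow> 'a^'n^'n" where
  "matrix_pow A 0 = mat 1"
| "matrix_pow A (Suc m) = A ** matrix_pow A m"

end

theory Submission imports Defs "HOL-Computational_Algebra.Polynomial" "HOL-Computational_Algebra.Fundamental_Theorem_Algebra"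
begin

type_synonym 'n cm = "complex^'n^'n"

lemma mpow_Suc': "matrix_pow A (Suc m) = matrix_pow A m ** A"
  by (induction m) (simp_all add: matrix_mul_assoc)

lemma mpow_comm: "A ** matrix_pow A m = matrix_pow A m ** A"
  using mpow_Suc'[of A m] by simp

lemma transpose_mpow: "transpose (matrix_pow (A::complex^'n^'n) m) = matrix_pow (transpose A) m"
  proof (induction m)
  case (Suc m)
  have "transpose (matrix_pow A (Suc m)) = transpose (matrix_pow A m) ** transpose A"
    by (simp add: matrix_transpose_mul)
  then show ?case using Suc by (simp only: mpow_Suc')
qed (simp add: transpose_mat)

lemma rank_eq_range:
  fixes A :: "'a::field^'n^'m"
  shows "rank A = vec.dim (range (\<lambda>x. transpose A *v x))"
proof -
  have "rank A = vec.dim (columns (transpose A))"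
    by (simp add: row_rank_def_gen columns_transpose)
  also have "vec.span (columns (transpose A)) = range (\<lambda>x. transpose A *v x)"
  proof
    show "vec.span (columns (transpose A)) \<subseteq> range (\<lambda>x. transpose A *v x)"
    proof (rule vec.span_minimal)
      show "columns (transpose A) \<subseteq> range (\<lambda>x. transpose A *v x)"
      proof
        fix c assume "c \<in> columns (transpose A)"
        then obtain j where c: "c = column j (transpose A)" by (auto simp: columns_def)
        have "transpose A *v axis j 1 = c"
          unfolding c by (simp add: matrix_vector_mult_def column_def axis_def if_distrib sum.delta' cong: if_cong)
        then show "c \<in> range (\<lambda>x. transpose A *v x)" by blast
      qed
      show "vec.subspace (range (\<lambda>x. transpose A *v x))"
        by (rule vec.subspace_image[OF vec.subspace_UNIV])
    qed
    show "range (\<lambda>x. transpose A *v x) \<subseteq> vec.span (columns (transpose A))"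
      using matrix_vector_mult_in_columnspace_gen by blast
  qed
  then have "vec.dim (columns (transpose A)) = vec.dim (range (\<lambda>x. transpose A *v x))"
    by (metis vec.dim_span)
  finally show ?thesis .
qed


lemma mv_neg_left: "(-A) *v x = -(A *v (x::complex^'n))"
  by (simp add: matrix_vector_mult_def vec_eq_iff sum_negf)
lemma mv_neg_right: "A *v (-x) = -(A *v (x::complex^'n))"
  by (simp add: matrix_vector_mult_def vec_eq_iff sum_negf)

definition pev :: "complex poly \<Rightarrow> complex^'n^'n \<Rightarrow> complex^'n \<Rightarrow> complex^'n" where
  "pev p A x = fold_coeffs (\<lambda>a y. a *s x + A *v y) p 0"

lemma pev_pCons: "pev (pCons a p) A x = a *s x + A *v pev p A x"
proof (cases "a = 0 \<and> p = 0")
  case True then show ?thesis by (simp add: pev_def)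
next
  case False
  then show ?thesis
    by (cases "p = 0") (simp_all add: pev_def)
qed

lemma pev_0[simp]: "pev 0 A x = 0"
  by (simp add: pev_def)

lemma pev_add: "pev (p + q) A x = pev p A x + pev q A x"
proof (induction p arbitrary: q)
  case 0 then show ?case by simp
next
  case (pCons a p)
  obtain b q' where q: "q = pCons b q'" by (cases q) auto
  show ?case using pCons.IH[of q'] unfolding q
    by (simp add: pev_pCons matrix_vector_right_distrib vector_sadd_rdistrib algebra_simps)
qed

lemma pev_smult: "pev (smult c p) A x = c *s pev p A x"
  by (induction p) (simp_all add: pev_pCons vector_scalar_commute vector_add_ldistrib vector_smult_assoc)

lemma pev_minus: "pev (- p) A x = - pev p A x"
  using pev_smult[of "-1" p A x] by simp

lemma pev_diff: "pev (p - q) A x = pev p A x - pev q A x"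
  using pev_add[of p "-q" A x] pev_minus[of q A x] by simp

lemma pev_const: "pev [:c:] A x = c *s x"
  by (simp add: pev_pCons)

lemma pev_monom: "pev (monom 1 j) A x = matrix_pow A j *v x"
  by (induction j) (simp_all add: pev_pCons monom_0 monom_Suc matrix_vector_mul_assoc)

lemma pev_lin: "pev ([:-r, 1:] * q) A x = A *v pev q A x - r *s pev q A x"
proof -
  have "[:-r, 1:] * q = pCons 0 q - smult r q" by simp
  then show ?thesis
    by (simp only: pev_diff pev_smult pev_pCons) simp
qed

lemma pev_in:
  assumes W: "vec.subspace W" and inv: "\<forall>y\<in>W. A *v y \<in> W" and x: "x \<in> W"
  shows "pev p A x \<in> W"
  by (induction p) (simp_all add: pev_pCons vec.subspace_0[OF W] vec.subspace_add[OF W]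
       vec.subspace_scale[OF W] x inv)


lemma pow_in:
  assumes inv: "\<forall>y\<in>W. A *v y \<in> W" and x: "x \<in> W"
  shows "matrix_pow A i *v x \<in> W"
  by (induction i) (simp_all add: x inv flip: matrix_vector_mul_assoc)

lemma eig_poly:
  assumes W: "vec.subspace W" and inv: "\<forall>y\<in>W. A *v y \<in> W" and x: "x \<in> W" "x \<noteq> 0"
  shows "p \<noteq> 0 \<Longrightarrow> pev p A x = 0 \<Longrightarrow> \<exists>y c. y \<in> W \<and> y \<noteq> 0 \<and> A *v y = c *s y"
proof (induction "degree p" arbitrary: p rule: less_induct)
  case less
  show ?case
  proof (cases "degree p = 0")
    case True
    then have "p = [:coeff p 0:]" using degree_0_id by metis
    then have "coeff p 0 *s x = 0" "coeff p 0 \<noteq> 0" using less.prems pev_const[of "coeff p 0" A x]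
      by (metis, metis pCons_0_0)
    then show ?thesis using x by simp
  next
    case False
    then have "\<not> constant (poly p)" by (simp add: constant_degree)
    then obtain z where "poly p z = 0" using fundamental_theorem_of_algebra by blast
    then have "[:-z, 1:] dvd p" by (simp add: dvd_iff_poly_eq_0)
    then obtain q where p: "p = [:-z, 1:] * q" by (auto elim: dvdE)
    have q0: "q \<noteq> 0" using p less.prems by auto
    have dq: "degree q < degree p" using degree_mult_eq[of "[:-z, 1:]" q] q0 p by simp
    show ?thesis
    proof (cases "pev q A x = 0")
      case True
      then show ?thesis using less.hyps[OF dq q0] by blast
    next
      case False
      have "A *v pev q A x - z *s pev q A x = 0" using less.prems p pev_lin by metis
      then have "A *v pev q A x = z *s pev q A x" by simp
      then show ?thesis using False pev_in[OF W inv x(1)] by blast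
    qed
  qed
qed

lemma eig_exists:
  fixes A :: "complex^'n^'n"
  assumes W: "vec.subspace W" and inv: "\<forall>y\<in>W. A *v y \<in> W" and x: "x \<in> W" "x \<noteq> 0"
  shows "\<exists>y c. y \<in> W \<and> y \<noteq> 0 \<and> A *v y = c *s y"
proof -
  define S where "S j = (\<lambda>i. matrix_pow A i *v x) ` {..<j}" for j
  have SW: "S j \<subseteq> W" for j using pow_in[OF inv x(1)] by (auto simp: S_def)
  have ex: "\<exists>j. matrix_pow A j *v x \<in> vec.span (S j)"
  proof (rule ccontr)
    assume "\<not> ?thesis"
    then have nin: "matrix_pow A j *v x \<notin> vec.span (S j)" for j by blast
    have "vec.dim (S j) = j" for j
    proof (induction j)
      case 0 then show ?case by (simp add: S_def)
    next
      case (Suc j)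
      have "S (Suc j) = insert (matrix_pow A j *v x) (S j)" by (simp add: S_def lessThan_Suc)
      then show ?case using Suc nin[of j] by (simp add: vec.dim_insert)
    qed
    moreover have "vec.dim (S j) \<le> vec.dim W" for j using SW vec.dim_subset by blast
    ultimately show False by (metis Suc_n_not_le_n)
  qed
  then obtain j where j: "matrix_pow A j *v x \<in> vec.span (S j)" by blast
  have j0: "j > 0"
  proof (rule ccontr)
    assume "\<not> j > 0"
    then have "j = 0" by simp
    then show False using j x by (simp add: S_def)
  qed
  have rep: "\<exists>q. degree q < j \<and> v = pev q A x" if "v \<in> vec.span (S j)" for v
    using that
  proof (induction rule: vec.span_induct)
    case base
    show ?case
    proof (rule vec.subspaceI)
      show "0 \<in> Collect (\<lambda>v. \<exists>q. degree q < j \<and> v = pev q A x)"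
        using j0 by (auto intro!: exI[of _ 0])
      fix a b assume "a \<in> Collect (\<lambda>v. \<exists>q. degree q < j \<and> v = pev q A x)"
        "b \<in> Collect (\<lambda>v. \<exists>q. degree q < j \<and> v = pev q A x)"
      then obtain qa qb where "degree qa < j" "a = pev qa A x" "degree qb < j" "b = pev qb A x" by auto
      then show "a + b \<in> Collect (\<lambda>v. \<exists>q. degree q < j \<and> v = pev q A x)"
        by (auto intro!: exI[of _ "qa + qb"] simp: pev_add degree_add_less)
    next
      fix c a assume "a \<in> Collect (\<lambda>v. \<exists>q. degree q < j \<and> v = pev q A x)"
      then obtain qa where "degree qa < j" "a = pev qa A x" by auto
      then show "c *s a \<in> Collect (\<lambda>v. \<exists>q. degree q < j \<and> v = pev q A x)"
        by (auto intro!: exI[of _ "smult c qa"] simp: pev_smult)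
    qed
  next
    case (step v)
    then obtain i where "i < j" "v = matrix_pow A i *v x" by (auto simp: S_def)
    then show ?case
      by (intro exI[of _ "monom 1 i"]) (simp add: pev_monom degree_monom_eq)
  qed
  obtain q where q: "degree q < j" "matrix_pow A j *v x = pev q A x" using rep[OF j] by blast
  define p where "p = monom 1 j - q"
  have "coeff p j = 1" using q(1) by (simp add: p_def coeff_eq_0)
  then have "p \<noteq> 0" by auto
  moreover have "pev p A x = 0" using q(2) by (simp add: p_def pev_diff pev_monom)
  ultimately show ?thesis using eig_poly[OF W inv x] by blast
qed


lemma mm_neg_left: "(-A) ** B = -(A ** (B::complex^'n^'n))"
  by (simp add: matrix_matrix_mult_def vec_eq_iff sum_negf)
lemma mm_neg_right: "A ** (-B) = -(A ** (B::complex^'n^'n))"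
  by (simp add: matrix_matrix_mult_def vec_eq_iff sum_negf)

lemma dim_ge1:
  fixes W :: "(complex^'n) set"
  assumes "x \<in> W" "x \<noteq> 0" shows "1 \<le> vec.dim W"
  using vec.dim_subset[of "{x}" W] assms by simp

lemma dim_inj_image:
  fixes A :: "complex^'n^'n"
  assumes W: "vec.subspace W" and inj: "\<forall>y\<in>W. A *v y = 0 \<longrightarrow> y = 0"
  shows "vec.dim ((\<lambda>y. A *v y) ` W) = vec.dim W"
proof (rule vec.dim_image_eq[OF matrix_vector_mul_linear_gen])
  show "inj_on ((*v) A) (vec.span W)"
    unfolding vec.span_eq_iff[THEN iffD2, OF W]
  proof (rule inj_onI)
    fix u v assume "u \<in> W" "v \<in> W" "A *v u = A *v v"
    then have "A *v (u - v) = 0" "u - v \<in> W"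
      by (simp_all add: matrix_vector_mult_diff_distrib vec.subspace_diff[OF W])
    then show "u = v" using inj by auto
  qed
qed

lemma dim_sum_direct:
  fixes U V W :: "(complex^'n) set"
  assumes "vec.subspace U" "vec.subspace V" "U \<inter> V \<subseteq> {0}"
  shows "vec.dim {u + v |u v. u \<in> U \<and> v \<in> V} = vec.dim U + vec.dim V"
proof -
  have "U \<inter> V = {0}" using assms vec.subspace_0 by blast
  then show ?thesis using vec.dim_sums_Int[OF assms(1,2)] by simp
qed

lemma clifford:
  fixes e :: "nat \<Rightarrow> complex^'n^'n"
  assumes anti: "\<forall>i\<in>I. \<forall>j\<in>I. i \<noteq> j \<longrightarrow> e i ** e j = - (e j ** e i)"
  shows "finite S \<Longrightarrow> S \<subseteq> I \<Longrightarrow> vec.subspace W \<Longrightarrow> x \<in> W \<Longrightarrow> x \<noteq> 0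
    \<Longrightarrow> (\<forall>i\<in>S. \<forall>y\<in>W. e i *v y \<in> W) \<Longrightarrow> (\<forall>i\<in>S. \<forall>y\<in>W. e i *v y = 0 \<longrightarrow> y = 0)
    \<Longrightarrow> 2 ^ (card S div 2) \<le> vec.dim W"
proof (induction "card S" arbitrary: S W x rule: less_induct)
  case less
  note fin = less.prems(1) and SI = less.prems(2) and W = less.prems(3) and x = less.prems(4,5)
    and inv = less.prems(6) and inj = less.prems(7)
  show ?case
  proof (cases "card S < 2")
    case True
    then show ?thesis using dim_ge1[OF x] by simp
  next
    case False
    then obtain a where a: "a \<in> S" by fastforce
    have "card (S - {a}) \<noteq> 0" using False a fin by simp
    then obtain b where b: "b \<in> S" "b \<noteq> a" by (metis all_not_in_conv card.empty DiffE singletonI)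
    define s where "s = e a ** e b"
    have sv: "s *v y = e a *v (e b *v y)" for y by (simp add: s_def matrix_vector_mul_assoc)
    have invs: "\<forall>y\<in>W. s *v y \<in> W" using inv a b by (simp add: sv)
    have injs: "y \<in> W \<Longrightarrow> s *v y = 0 \<Longrightarrow> y = 0" for y using inv inj a b by (metis sv)
    obtain y0 c where y0: "y0 \<in> W" "y0 \<noteq> 0" "s *v y0 = c *s y0"
      using eig_exists[OF W invs x] by blast
    have c0: "c \<noteq> 0" using y0 injs by force
    define W1 where "W1 = {y\<in>W. s *v y = c *s y}"
    define W2 where "W2 = {y\<in>W. s *v y = (-c) *s y}"
    have sub: "vec.subspace {y\<in>W. s *v y = d *s y}" for d
    proof (rule vec.subspaceI)
      show "0 \<in> {y\<in>W. s *v y = d *s y}" using vec.subspace_0[OF W] by simp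
    next
      fix u v assume "u \<in> {y\<in>W. s *v y = d *s y}" "v \<in> {y\<in>W. s *v y = d *s y}"
      then show "u + v \<in> {y\<in>W. s *v y = d *s y}"
        by (simp add: vec.subspace_add[OF W] matrix_vector_right_distrib vector_add_ldistrib)
    next
      fix r u assume "u \<in> {y\<in>W. s *v y = d *s y}"
      then show "r *s u \<in> {y\<in>W. s *v y = d *s y}"
        by (simp add: vec.subspace_scale[OF W] vector_scalar_commute vector_smult_assoc mult.commute)
    qed
    have W1s: "vec.subspace W1" and W2s: "vec.subspace W2"
      using sub unfolding W1_def W2_def by blast+
    have ab: "a \<in> I" "b \<in> I" using a b SI by auto
    have comm: "e i ** s = s ** e i" if "i \<in> S - {a, b}" for i
    proof -
      have i: "i \<in> I" "i \<noteq> a" "i \<noteq> b" using that SI by auto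
      have ia: "e i ** e a = -(e a ** e i)" and ib: "e i ** e b = -(e b ** e i)"
        using anti i ab by blast+
      have "e i ** s = (e i ** e a) ** e b" by (simp add: s_def matrix_mul_assoc)
      also have "\<dots> = -(e a ** (e i ** e b))"
        by (simp only: ia mm_neg_left matrix_mul_assoc)
      also have "\<dots> = s ** e i"
        by (simp only: ib mm_neg_right s_def matrix_mul_assoc minus_minus)
      finally show ?thesis .
    qed
    have antis: "s ** e a = -(e a ** s)"
    proof -
      have "s ** e a = e a ** (e b ** e a)" by (simp add: s_def matrix_mul_assoc)
      also have "\<dots> = -(e a ** s)"
      proof -
        have ba: "e b ** e a = -(e a ** e b)" using anti ab b by blast
        show ?thesis by (simp only: ba mm_neg_right s_def matrix_mul_assoc)
      qed
      finally show ?thesis .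
    qed
    have y0W1: "y0 \<in> W1" using y0 by (simp add: W1_def)
    have S'sub: "S - {a, b} \<subseteq> I" using SI by auto
    have invW1: "\<forall>i\<in>S - {a, b}. \<forall>y\<in>W1. e i *v y \<in> W1"
    proof (intro ballI)
      fix i y assume i: "i \<in> S - {a, b}" and y: "y \<in> W1"
      have "s *v (e i *v y) = e i *v (s *v y)"
        by (simp add: matrix_vector_mul_assoc comm[OF i])
      then show "e i *v y \<in> W1" using y i inv
        by (auto simp: W1_def vector_scalar_commute)
    qed
    have injW1: "\<forall>i\<in>S - {a, b}. \<forall>y\<in>W1. e i *v y = 0 \<longrightarrow> y = 0"
      using inj by (auto simp: W1_def)
    have cardlt: "card (S - {a, b}) < card S"
      using a b fin by (intro psubset_card_mono) auto
    have IH: "2 ^ (card (S - {a, b}) div 2) \<le> vec.dim W1"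
      using less.hyps[OF cardlt _ S'sub W1s y0W1 y0(2) invW1 injW1] fin by simp
    have cardS: "card (S - {a, b}) = card S - 2" using a b fin by (simp add: card_Diff_subset)
    have maps: "e a *v y \<in> W2" if "y \<in> W1" for y
    proof -
      have "s *v (e a *v y) = -(e a *v (s *v y))"
        by (simp add: matrix_vector_mul_assoc antis mv_neg_left)
      then show ?thesis using that inv a by (simp add: W1_def W2_def vector_scalar_commute)
    qed
    have "vec.dim W1 = vec.dim ((\<lambda>y. e a *v y) ` W1)"
      using dim_inj_image[OF W1s] inj a by (auto simp: W1_def)
    also have "\<dots> \<le> vec.dim W2" using maps by (intro vec.dim_subset) auto
    finally have d12: "vec.dim W1 \<le> vec.dim W2" .
    have int: "W1 \<inter> W2 \<subseteq> {0}"
    proof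
      fix y assume "y \<in> W1 \<inter> W2"
      then have "s *v y = c *s y" "s *v y = (-c) *s y" unfolding W1_def W2_def by blast+
      then have "c *s y = (-c) *s y" by metis
      moreover have "(2 * c) *s y = c *s y - (-c) *s y" by (simp add: vec_eq_iff algebra_simps)
      ultimately have "(2 * c) *s y = 0" by simp
      then show "y \<in> {0}" using c0 by simp
    qed
    have "vec.dim W1 + vec.dim W2 = vec.dim {u + v |u v. u \<in> W1 \<and> v \<in> W2}"
      using dim_sum_direct[OF W1s W2s int] by simp
    also have "\<dots> \<le> vec.dim W"
      by (intro vec.dim_subset) (auto simp: W1_def W2_def intro: vec.subspace_add[OF W])
    finally have "2 * vec.dim W1 \<le> vec.dim W" using d12 by simp
    moreover have "card S div 2 = Suc ((card S - 2) div 2)" using False by (simp add: div_if)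
    ultimately show ?thesis using IH cardS by simp
  qed
qed


lemma pow_add: "matrix_pow A (a + b) = matrix_pow A a ** matrix_pow (A::complex^'n^'n) b"
  by (induction a) (simp_all add: matrix_mul_assoc)

lemma pow_anti:
  fixes A B :: "complex^'n^'n"
  assumes "A ** B = -(B ** A)"
  shows "matrix_pow B m ** A = A ** matrix_pow B m \<or> matrix_pow B m ** A = -(A ** matrix_pow B m)"
proof (induction m)
  case 0 then show ?case by simp
next
  case (Suc m)
  have BA: "B ** A = -(A ** B)" using assms by (simp add: minus_equation_iff)
  have e: "matrix_pow B (Suc m) ** A = B ** (matrix_pow B m ** A)" by (simp add: matrix_mul_assoc)
  from Suc show ?case
  proof
    assume h: "matrix_pow B m ** A = A ** matrix_pow B m"
    have "matrix_pow B (Suc m) ** A = -(A ** matrix_pow B (Suc m))"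
      unfolding e h by (simp add: matrix_mul_assoc BA mm_neg_left)
    then show ?thesis by blast
  next
    assume h: "matrix_pow B m ** A = -(A ** matrix_pow B m)"
    have "matrix_pow B (Suc m) ** A = A ** matrix_pow B (Suc m)"
      unfolding e h by (simp add: matrix_mul_assoc BA mm_neg_left mm_neg_right)
    then show ?thesis by blast
  qed
qed

lemma dec_chain:
  fixes S :: "nat \<Rightarrow> (complex^'n) set"
  assumes sub: "\<And>i. vec.subspace (S i)" and mono: "\<And>i. S (Suc i) \<subseteq> S i"
  shows "\<exists>i\<le>vec.dim (S 0). S (Suc i) = S i"
proof (rule ccontr)
  assume "\<not> ?thesis"
  then have ne: "i \<le> vec.dim (S 0) \<Longrightarrow> S (Suc i) \<noteq> S i" for i by blast
  have lt: "i \<le> vec.dim (S 0) \<Longrightarrow> vec.dim (S (Suc i)) < vec.dim (S i)" for i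
  proof -
    assume that: "i \<le> vec.dim (S 0)" 
    have "vec.span (S (Suc i)) \<subset> vec.span (S i)"
    proof -
      have sp: "vec.span (S j) = S j" for j using sub by simp
      have "S (Suc i) \<noteq> S i" using ne that by blast
      then show ?thesis using mono[of i] by (auto simp: sp)
    qed
    then show ?thesis by (rule vec.dim_psubset)
  qed
  have "i \<le> Suc (vec.dim (S 0)) \<longrightarrow> vec.dim (S i) + i \<le> vec.dim (S 0)" for i
  proof (induction i)
    case (Suc i)
    show ?case
    proof
      assume "Suc i \<le> Suc (vec.dim (S 0))"
      then have "i \<le> vec.dim (S 0)" by simp
      then have "vec.dim (S (Suc i)) < vec.dim (S i)" "vec.dim (S i) + i \<le> vec.dim (S 0)"
        using lt Suc.IH by auto
      then show "vec.dim (S (Suc i)) + Suc i \<le> vec.dim (S 0)" by simp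
    qed
  qed simp
  from this[of "Suc (vec.dim (S 0))"] show False by simp
qed

lemma inc_chain:
  fixes S :: "nat \<Rightarrow> (complex^'n) set"
  assumes sub: "\<And>i. vec.subspace (S i)" and mono: "\<And>i. S i \<subseteq> S (Suc i)"
    and T: "\<And>i. S i \<subseteq> T"
  shows "\<exists>i\<le>vec.dim T. S (Suc i) = S i"
proof (rule ccontr)
  assume "\<not> ?thesis"
  then have ne: "i \<le> vec.dim T \<Longrightarrow> S (Suc i) \<noteq> S i" for i by blast
  have lt: "i \<le> vec.dim T \<Longrightarrow> vec.dim (S i) < vec.dim (S (Suc i))" for i
  proof -
    assume that: "i \<le> vec.dim T" 
    have "vec.span (S i) \<subset> vec.span (S (Suc i))"
    proof -
      have sp: "vec.span (S j) = S j" for j using sub by simp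
      have "S (Suc i) \<noteq> S i" using ne that by blast
      then show ?thesis using mono[of i] by (auto simp: sp)
    qed
    then show ?thesis by (rule vec.dim_psubset)
  qed
  have "i \<le> Suc (vec.dim T) \<longrightarrow> i \<le> vec.dim (S i)" for i
  proof (induction i)
    case (Suc i)
    show ?case
    proof
      assume "Suc i \<le> Suc (vec.dim T)"
      then have "i \<le> vec.dim T" by simp
      then have "vec.dim (S i) < vec.dim (S (Suc i))" "i \<le> vec.dim (S i)"
        using lt Suc.IH by auto
      then show "Suc i \<le> vec.dim (S (Suc i))" by simp
    qed
  qed simp
  moreover have "vec.dim (S i) \<le> vec.dim T" for i using T vec.dim_subset by blast
  ultimately show False by (metis Suc_n_not_le_n le_trans order_refl)
qed

lemma chain_prop:
  assumes step: "\<And>i. S (Suc i) = S i \<Longrightarrow> S (Suc (Suc i)) = S (Suc i)"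
    and i: "S (Suc i) = S i"
  shows "i \<le> m \<Longrightarrow> S m = S i"
proof (induction m)
  case 0 then show ?case by simp
next
  case (Suc m)
  show ?case
  proof (cases "i = Suc m")
    case False
    then have "i \<le> m" using Suc by simp
    then have "S m = S i" using Suc by simp
    moreover have "S (Suc m) = S m"
    proof -
      have "S (Suc (i + d)) = S (i + d)" for d
        by (induction d) (simp_all add: i step)
      from this[of "m - i"] show ?thesis using \<open>i \<le> m\<close> by simp
    qed
    ultimately show ?thesis by simp
  qed simp
qed

lemma fitting:
  fixes B :: "complex^'n^'n"
  assumes W: "vec.subspace W" and inv: "\<forall>y\<in>W. B *v y \<in> W" and dN: "vec.dim W \<le> N"
  defines "K \<equiv> {x\<in>W. matrix_pow B N *v x = 0}"
    and "Img \<equiv> (\<lambda>y. matrix_pow B N *v y) ` W"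
  shows "W = {u + v |u v. u \<in> K \<and> v \<in> Img}" and "K \<inter> Img \<subseteq> {0}"
proof -
  define IS where "IS m = (\<lambda>y. matrix_pow B m *v y) ` W" for m
  define KS where "KS m = {x\<in>W. matrix_pow B m *v x = 0}" for m
  have ISsuc: "IS (Suc m) = (\<lambda>y. B *v y) ` IS m" for m
    unfolding IS_def image_image by (simp only: matrix_vector_mul_assoc matrix_pow.simps)
  have IS_sub: "vec.subspace (IS m)" for m
    unfolding IS_def by (rule vec.subspace_image[OF W])
  have IS_mono: "IS (Suc m) \<subseteq> IS m" for m
  proof
    fix z assume "z \<in> IS (Suc m)"
    then obtain y where y: "y \<in> W" "z = matrix_pow B (Suc m) *v y" unfolding IS_def by blast
    then have "z = matrix_pow B m *v (B *v y)" by (simp only: mpow_Suc' matrix_vector_mul_assoc)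
    then show "z \<in> IS m" using y inv by (auto simp: IS_def)
  qed
  have IS0: "IS 0 = W" by (simp add: IS_def)
  obtain i1 where i1: "IS (Suc i1) = IS i1" "i1 \<le> N" using dec_chain[of IS, OF IS_sub IS_mono] dN IS0 by auto
  have ISst: "IS m = IS i1" if "i1 \<le> m" for m
    using chain_prop[of IS i1 m] i1(1) that ISsuc by simp
  have KS_sub: "vec.subspace (KS m)" for m
  proof (rule vec.subspaceI)
    show "0 \<in> KS m" using vec.subspace_0[OF W] by (simp add: KS_def)
  next
    fix u v assume "u \<in> KS m" "v \<in> KS m"
    then show "u + v \<in> KS m" by (simp add: KS_def vec.subspace_add[OF W] matrix_vector_right_distrib)
  next
    fix c u assume "u \<in> KS m"
    then show "c *s u \<in> KS m" by (simp add: KS_def vec.subspace_scale[OF W] vector_scalar_commute)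
  qed
  have KS_mono: "KS m \<subseteq> KS (Suc m)" for m
    by (auto simp: KS_def simp flip: matrix_vector_mul_assoc)
  obtain i2 where i2: "KS (Suc i2) = KS i2" "i2 \<le> N" using inc_chain[of KS W, OF KS_sub KS_mono] dN by (force simp: KS_def)
  have KSstep: "KS (Suc (Suc m)) = KS (Suc m)" if h: "KS (Suc m) = KS m" for m
  proof
    show "KS (Suc (Suc m)) \<subseteq> KS (Suc m)"
    proof
      fix x assume x: "x \<in> KS (Suc (Suc m))"
      then have "matrix_pow B (Suc (Suc m)) *v x = 0" "x \<in> W" unfolding KS_def by blast+
      then have "matrix_pow B (Suc m) *v (B *v x) = 0" "x \<in> W"
        by (metis mpow_Suc' matrix_vector_mul_assoc)+
      then have "B *v x \<in> KS (Suc m)" using inv by (simp add: KS_def)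
      then have "B *v x \<in> KS m" using h by simp
      then have "matrix_pow B m *v (B *v x) = 0" by (simp add: KS_def)
      then show "x \<in> KS (Suc m)" using \<open>x \<in> W\<close> unfolding KS_def
        by (metis (mono_tags, lifting) mem_Collect_eq mpow_Suc' matrix_vector_mul_assoc)
    qed
  qed (rule KS_mono)
  have KSst: "KS m = KS i2" if "i2 \<le> m" for m
    using chain_prop[of KS i2 m] i2(1) that KSstep by simp
  show "W = {u + v |u v. u \<in> K \<and> v \<in> Img}"
  proof
    show "W \<subseteq> {u + v |u v. u \<in> K \<and> v \<in> Img}"
    proof
      fix x assume x: "x \<in> W"
      have "matrix_pow B N *v x \<in> IS N" using x by (auto simp: IS_def)
      also have "IS N = IS (N + N)"
        using ISst[of N] ISst[of "N + N"] i1 by simp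
      finally obtain y where y: "y \<in> W" "matrix_pow B N *v x = matrix_pow B (N + N) *v y"
        by (auto simp: IS_def)
      then have "matrix_pow B N *v x = matrix_pow B N *v (matrix_pow B N *v y)"
        by (simp add: pow_add matrix_vector_mul_assoc)
      then have "x - matrix_pow B N *v y \<in> K"
        using x y pow_in[OF inv y(1), of N] vec.subspace_diff[OF W]
        by (simp add: K_def matrix_vector_mult_diff_distrib)
      moreover have "matrix_pow B N *v y \<in> Img" using y by (simp add: Img_def)
      ultimately show "x \<in> {u + v |u v. u \<in> K \<and> v \<in> Img}"
        by (intro CollectI exI[of _ "x - matrix_pow B N *v y"] exI[of _ "matrix_pow B N *v y"]) simp
    qed
    show "{u + v |u v. u \<in> K \<and> v \<in> Img} \<subseteq> W"
      using pow_in[OF inv] vec.subspace_add[OF W] by (auto simp: K_def Img_def)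
  qed
  show "K \<inter> Img \<subseteq> {0}"
  proof
    fix z assume z: "z \<in> K \<inter> Img"
    then obtain y where y: "y \<in> W" "z = matrix_pow B N *v y" by (auto simp: Img_def)
    then have "y \<in> KS (N + N)" using z by (simp add: K_def KS_def pow_add matrix_vector_mul_assoc)
    also have "KS (N + N) = KS N" using KSst[of N] KSst[of "N + N"] i2 by simp
    finally show "z \<in> {0}" using y by (simp add: KS_def)
  qed
qed


lemma pow_inj:
  fixes A :: "complex^'n^'n"
  assumes inv: "\<forall>y\<in>W. A *v y \<in> W" and inj: "\<forall>y\<in>W. A *v y = 0 \<longrightarrow> y = 0"
  shows "y \<in> W \<Longrightarrow> matrix_pow A m *v y = 0 \<Longrightarrow> y = 0"
proof (induction m arbitrary: y)
  case 0 then show ?case by simp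
next
  case (Suc m)
  have "matrix_pow A m *v (A *v y) = 0" using Suc.prems by (metis mpow_Suc' matrix_vector_mul_assoc)
  then have "A *v y = 0" using Suc.IH inv Suc.prems(1) by blast
  then show ?case using inj Suc.prems(1) by blast
qed

lemma arith_bound:
  fixes c d :: nat
  assumes h: "2 ^ (c div 2) \<le> d" and d: "1 \<le> d"
  shows "real c * real d \<le> (2 * log 2 (real d) + 1) * real d"
proof -
  have "real (c div 2) = log 2 (2 ^ (c div 2))" by (simp add: log_nat_power)
  also have "\<dots> \<le> log 2 (real d)"
  proof (rule log_mono)
    show "(2::real) ^ (c div 2) \<le> real d" using h by (metis of_nat_le_iff of_nat_numeral of_nat_power)
  qed simp_all
  finally have a: "real (c div 2) \<le> log 2 (real d)" .
  have "c \<le> 2 * (c div 2) + 1" by simp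
  then have "real c \<le> 2 * real (c div 2) + 1" by linarith
  then have "real c \<le> 2 * log 2 (real d) + 1" using a by linarith
  then show ?thesis using d by (intro mult_right_mono) simp_all
qed

lemma superadd:
  fixes a b :: nat
  assumes "1 \<le> a" "1 \<le> b"
  shows "(2 * log 2 (real a) + 1) * real a + (2 * log 2 (real b) + 1) * real b
    \<le> (2 * log 2 (real (a + b)) + 1) * real (a + b)"
proof -
  have la: "log 2 (real a) \<le> log 2 (real (a + b))" using assms by (intro log_mono) simp_all
  have lb: "log 2 (real b) \<le> log 2 (real (a + b))" using assms by (intro log_mono) simp_all
  have "(2 * log 2 (real a) + 1) * real a \<le> (2 * log 2 (real (a + b)) + 1) * real a"
    using la by (intro mult_right_mono) simp_all
  moreover have "(2 * log 2 (real b) + 1) * real b \<le> (2 * log 2 (real (a + b)) + 1) * real b"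
    using lb by (intro mult_right_mono) simp_all
  ultimately show ?thesis by (simp add: distrib_left)
qed


lemma main:
  fixes e :: "nat \<Rightarrow> complex^'n^'n"
  assumes anti: "\<forall>i\<in>I. \<forall>j\<in>I. i \<noteq> j \<longrightarrow> e i ** e j = - (e j ** e i)" and finI: "finite I"
  shows "vec.subspace W \<Longrightarrow> (\<forall>i\<in>I. \<forall>y\<in>W. e i *v y \<in> W) \<Longrightarrow>
    real (\<Sum>i\<in>I. vec.dim ((\<lambda>y. matrix_pow (e i) CARD('n) *v y) ` W))
      \<le> (2 * log 2 (real (vec.dim W)) + 1) * real (vec.dim W)"
proof (induction "vec.dim W" arbitrary: W rule: less_induct)
  case less
  note W = less.prems(1) and inv = less.prems(2)
  define R where "R i V = vec.dim ((\<lambda>y. matrix_pow (e i) CARD('n) *v y) ` V)" for i V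
  have dN: "vec.dim W \<le> CARD('n)" by (rule dim_subset_UNIV_cart_gen)
  have pos: "CARD('n) = Suc (CARD('n) - 1)" by simp
  show ?case
  proof (cases "\<exists>j\<in>I. (\<exists>x\<in>W. x \<noteq> 0 \<and> e j *v x = 0) \<and> (\<exists>y\<in>W. matrix_pow (e j) CARD('n) *v y \<noteq> 0)")
    case True
    then obtain j x y where j: "j \<in> I" and x: "x \<in> W" "x \<noteq> 0" "e j *v x = 0"
      and y: "y \<in> W" "matrix_pow (e j) CARD('n) *v y \<noteq> 0" by blast
    define P where "P = matrix_pow (e j) CARD('n)"
    define K where "K = {x\<in>W. P *v x = 0}"
    define Img where "Img = (\<lambda>y. P *v y) ` W"
    have WKI: "W = {u + v |u v. u \<in> K \<and> v \<in> Img}" and KI: "K \<inter> Img \<subseteq> {0}"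
      using fitting[OF W _ dN, of "e j"] inv j unfolding K_def Img_def P_def by auto
    have Ks: "vec.subspace K"
    proof (rule vec.subspaceI)
      show "0 \<in> K" using vec.subspace_0[OF W] by (simp add: K_def)
    next
      fix u v assume "u \<in> K" "v \<in> K"
      then show "u + v \<in> K" by (simp add: K_def vec.subspace_add[OF W] matrix_vector_right_distrib)
    next
      fix c u assume "u \<in> K"
      then show "c *s u \<in> K" by (simp add: K_def vec.subspace_scale[OF W] vector_scalar_commute)
    qed
    have Is: "vec.subspace Img" unfolding Img_def by (rule vec.subspace_image[OF W])
    have comm: "P ** e i = e i ** P \<or> P ** e i = -(e i ** P)" if i: "i \<in> I" for i
    proof (cases "i = j")
      case True then show ?thesis by (simp add: P_def mpow_comm)
    next
      case False
      then have "e i ** e j = -(e j ** e i)" using anti i j by blast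
      then show ?thesis unfolding P_def by (rule pow_anti)
    qed
    have invK: "\<forall>z\<in>K. e i *v z \<in> K" if i: "i \<in> I" for i
    proof
      fix z assume z: "z \<in> K"
      have a: "P *v (e i *v z) = (P ** e i) *v z" by (simp add: matrix_vector_mul_assoc)
      have b: "(e i ** P) *v z = 0" using z by (simp add: K_def flip: matrix_vector_mul_assoc)
      have "P *v (e i *v z) = 0"
        using comm[OF i] proof
        assume "P ** e i = e i ** P" then show ?thesis using a b by simp
      next
        assume "P ** e i = -(e i ** P)" then show ?thesis using a b by (simp add: mv_neg_left)
      qed
      then show "e i *v z \<in> K" using z inv i by (simp add: K_def)
    qed
    have invI: "\<forall>z\<in>Img. e i *v z \<in> Img" if i: "i \<in> I" for i
    proof
      fix z assume z: "z \<in> Img"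
      then obtain w where w: "w \<in> W" "z = P *v w" by (auto simp: Img_def)
      have ew: "e i *v w \<in> W" "-(e i *v w) \<in> W" using w inv i vec.subspace_neg[OF W] by auto
      from comm[OF i] show "e i *v z \<in> Img"
      proof
        assume h: "P ** e i = e i ** P"
        have "e i *v z = P *v (e i *v w)" by (simp add: w matrix_vector_mul_assoc h)
        then show ?thesis using ew by (simp add: Img_def)
      next
        assume h: "P ** e i = -(e i ** P)"
        then have h': "e i ** P = -(P ** e i)" by simp
        have "e i *v z = P *v (-(e i *v w))"
          by (simp add: w matrix_vector_mul_assoc h' mv_neg_left mv_neg_right)
        then show ?thesis using ew by (simp add: Img_def)
      qed
    qed
    have dW: "vec.dim W = vec.dim K + vec.dim Img"
      using dim_sum_direct[OF Ks Is KI] WKI by simp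
    have xK: "x \<in> K"
    proof -
      have "P *v x = matrix_pow (e j) (CARD('n) - 1) *v (e j *v x)"
        unfolding P_def by (subst pos) (simp only: mpow_Suc' matrix_vector_mul_assoc)
      then show ?thesis using x by (simp add: K_def)
    qed
    have dK: "1 \<le> vec.dim K" using dim_ge1[OF xK x(2)] .
    have dI: "1 \<le> vec.dim Img" using dim_ge1[of "P *v y" Img] y by (simp add: Img_def P_def)
    have IHK: "real (\<Sum>i\<in>I. R i K) \<le> (2 * log 2 (real (vec.dim K)) + 1) * real (vec.dim K)"
      unfolding R_def using less.hyps[OF _ Ks] dW dI invK by simp
    have IHI: "real (\<Sum>i\<in>I. R i Img) \<le> (2 * log 2 (real (vec.dim Img)) + 1) * real (vec.dim Img)"
      unfolding R_def using less.hyps[OF _ Is] dW dK invI by simp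
    have split: "R i W = R i K + R i Img" if i: "i \<in> I" for i
    proof -
      define Q where "Q = matrix_pow (e i) CARD('n)"
      have QK: "(\<lambda>y. Q *v y) ` K \<subseteq> K" using pow_in[OF invK[OF i]] by (auto simp: Q_def)
      have QI: "(\<lambda>y. Q *v y) ` Img \<subseteq> Img" using pow_in[OF invI[OF i]] by (auto simp: Q_def)
      have eq: "(\<lambda>y. Q *v y) ` W = {a + b |a b. a \<in> (\<lambda>y. Q *v y) ` K \<and> b \<in> (\<lambda>y. Q *v y) ` Img}"
      proof
        show "(\<lambda>y. Q *v y) ` W \<subseteq> {a + b |a b. a \<in> (\<lambda>y. Q *v y) ` K \<and> b \<in> (\<lambda>y. Q *v y) ` Img}"
        proof
          fix z assume "z \<in> (\<lambda>y. Q *v y) ` W"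
          then obtain w where "w \<in> W" "z = Q *v w" by blast
          then obtain u v where "u \<in> K" "v \<in> Img" "w = u + v" using WKI by blast
          then show "z \<in> {a + b |a b. a \<in> (\<lambda>y. Q *v y) ` K \<and> b \<in> (\<lambda>y. Q *v y) ` Img}"
            using \<open>z = Q *v w\<close> by (auto simp: matrix_vector_right_distrib)
        qed
        show "{a + b |a b. a \<in> (\<lambda>y. Q *v y) ` K \<and> b \<in> (\<lambda>y. Q *v y) ` Img} \<subseteq> (\<lambda>y. Q *v y) ` W"
        proof
          fix z assume "z \<in> {a + b |a b. a \<in> (\<lambda>y. Q *v y) ` K \<and> b \<in> (\<lambda>y. Q *v y) ` Img}"
          then obtain u v where uv: "u \<in> K" "v \<in> Img" "z = Q *v u + Q *v v" by blast
          then have "u + v \<in> W" using WKI by blast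
          then show "z \<in> (\<lambda>y. Q *v y) ` W" using uv by (auto simp: matrix_vector_right_distrib[symmetric])
        qed
      qed
      have int: "(\<lambda>y. Q *v y) ` K \<inter> (\<lambda>y. Q *v y) ` Img \<subseteq> {0}" using QK QI KI by blast
      show ?thesis unfolding R_def Q_def[symmetric] eq
        by (rule dim_sum_direct[OF vec.subspace_image[OF Ks] vec.subspace_image[OF Is] int])
    qed
    have "(\<Sum>i\<in>I. R i W) = (\<Sum>i\<in>I. R i K) + (\<Sum>i\<in>I. R i Img)"
      using split by (simp add: sum.distrib[symmetric] cong: sum.cong)
    then have "real (\<Sum>i\<in>I. R i W) = real (\<Sum>i\<in>I. R i K) + real (\<Sum>i\<in>I. R i Img)"
      by (simp only: of_nat_add)
    then have "real (\<Sum>i\<in>I. R i W) \<le> (2 * log 2 (real (vec.dim K)) + 1) * real (vec.dim K)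
        + (2 * log 2 (real (vec.dim Img)) + 1) * real (vec.dim Img)"
      using IHK IHI by linarith
    also have "\<dots> \<le> (2 * log 2 (real (vec.dim W)) + 1) * real (vec.dim W)"
      using superadd[OF dK dI] dW by simp
    finally show ?thesis unfolding R_def .
  next
    case False
    define S where "S = {i\<in>I. \<forall>x\<in>W. e i *v x = 0 \<longrightarrow> x = 0}"
    have SI: "S \<subseteq> I" and finS: "finite S" using finI by (auto simp: S_def)
    have RS: "R i W = vec.dim W" if "i \<in> S" for i
    proof -
      have iI: "i \<in> I" and injW: "\<forall>x\<in>W. e i *v x = 0 \<longrightarrow> x = 0" using that by (simp_all add: S_def)
      have invi: "\<forall>y\<in>W. e i *v y \<in> W" using inv iI by blast
      have "\<forall>y\<in>W. matrix_pow (e i) CARD('n) *v y = 0 \<longrightarrow> y = 0" using pow_inj[OF invi injW] by blast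
      then show ?thesis unfolding R_def by (rule dim_inj_image[OF W])
    qed
    have RnS: "R i W = 0" if "i \<in> I - S" for i
    proof -
      have iI: "i \<in> I" and "\<not> (\<forall>x\<in>W. e i *v x = 0 \<longrightarrow> x = 0)" using that by (simp_all add: S_def)
      then have "\<exists>x\<in>W. x \<noteq> 0 \<and> e i *v x = 0" by blast
      then have "\<forall>y\<in>W. matrix_pow (e i) CARD('n) *v y = 0" using False iI by blast
      then have "(\<lambda>y. matrix_pow (e i) CARD('n) *v y) ` W \<subseteq> {0}" by auto
      then have "R i W \<le> vec.dim {0::complex^'n}" unfolding R_def by (rule vec.dim_subset)
      then show ?thesis by simp
    qed
    have "(\<Sum>i\<in>I. R i W) = (\<Sum>i\<in>I - S. R i W) + (\<Sum>i\<in>S. R i W)"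
      by (rule sum.subset_diff[OF SI finI])
    also have "\<dots> = card S * vec.dim W" using RS RnS by simp
    finally have sumeq: "(\<Sum>i\<in>I. R i W) = card S * vec.dim W" .
    show ?thesis
    proof (cases "vec.dim W = 0")
      case True
      have z: "real (vec.dim W) = 0" by (simp only: True of_nat_0)
      have "real (\<Sum>i\<in>I. R i W) = 0" using sumeq by (simp only: True mult_0_right of_nat_0)
      then show ?thesis unfolding R_def z by (simp only: mult_0_right order_refl)
    next
      case False
      have "\<not> W \<subseteq> {0}"
      proof
        assume "W \<subseteq> {0}"
        then have "vec.dim W \<le> vec.dim {0::complex^'n}" by (rule vec.dim_subset)
        then show False using False by simp
      qed
      then obtain x where x: "x \<in> W" "x \<noteq> 0" by blast
      have invS: "\<forall>i\<in>S. \<forall>y\<in>W. e i *v y \<in> W" using inv SI by blast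
      have injS: "\<forall>i\<in>S. \<forall>y\<in>W. e i *v y = 0 \<longrightarrow> y = 0" by (simp add: S_def)
      have "2 ^ (card S div 2) \<le> vec.dim W" by (rule clifford[OF anti finS SI W x invS injS])
      then have b: "real (card S) * real (vec.dim W) \<le> (2 * log 2 (real (vec.dim W)) + 1) * real (vec.dim W)"
        by (rule arith_bound) (use False in linarith)
      have "real (\<Sum>i\<in>I. R i W) = real (card S) * real (vec.dim W)" using sumeq by (simp only: of_nat_mult)
      then show ?thesis using b unfolding R_def by linarith
    qed
  qed
qed


lemma transpose_neg: "transpose (- A) = - transpose (A::complex^'n^'n)"
  unfolding transpose_def by (simp add: vec_eq_iff)

theorem theorem3:
  fixes e :: "nat \<Rightarrow> complex^'n^'n" and k :: nat
  assumes anticomm: "\<forall>i\<in>{1..k}. \<forall>j\<in>{1..k}. i \<noteq> j \<longrightarrow> e i ** e j = - (e j ** e i)"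
  shows "real (\<Sum>i=1..k. rank (matrix_pow (e i) CARD('n)))
           \<le> (2 * log 2 (real CARD('n)) + 1) * real CARD('n)"
proof -
  define f where "f i = transpose (e i)" for i
  have anti': "\<forall>i\<in>{1..k}. \<forall>j\<in>{1..k}. i \<noteq> j \<longrightarrow> f i ** f j = - (f j ** f i)"
  proof (intro ballI impI)
    fix i j assume ij: "i \<in> {1..k}" "j \<in> {1..k}" "i \<noteq> j"
    have h: "e j ** e i = - (e i ** e j)"
      by (rule anticomm[rule_format]) (use ij in auto)
    have "f i ** f j = transpose (e j ** e i)" by (simp add: f_def matrix_transpose_mul)
    also have "\<dots> = - (f j ** f i)" by (simp add: h transpose_neg f_def matrix_transpose_mul)
    finally show "f i ** f j = - (f j ** f i)" .
  qed
  have r: "rank (matrix_pow (e i) CARD('n)) = vec.dim ((\<lambda>y. matrix_pow (f i) CARD('n) *v y) ` UNIV)" for i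
    by (simp only: rank_eq_range transpose_mpow f_def)
  have "real (\<Sum>i\<in>{1..k}. vec.dim ((\<lambda>y. matrix_pow (f i) CARD('n) *v y) ` UNIV))
      \<le> (2 * log 2 (real (vec.dim (UNIV :: (complex^'n) set))) + 1) * real (vec.dim (UNIV :: (complex^'n) set))"
    by (rule main[OF anti']) simp_all
  then show ?thesis by (simp only: r vec_dim_card)
qed

end
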